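(* Let $N$ be a near-ring. Then a subset $P\subseteq N$ is an equivalence class of some congruence on $N$ if and only if $P$ is a paragon in $\mathrm{T}(N)$.
   Context: A near-ring is $(N,+,\cdot)$ with $(N,+)$ a group, $\cdot$ associative, and $n(m+m')=nm+nm'$. A congruence on $N$ is an equivalence relation compatible with $+$ and $\cdot$. $\mathrm{T}(N)$ is the set $N$ with ternary operation $[a,b,c]=a-b+c$ and the multiplication of $N$. A heap is a set with a ternary operation satisfying $[a_1,a_2,[a_3,a_4,a_5]]=[[a_1,a_2,a_3],a_4,a_5]$ and $[a,a,b]=b=[b,a,a]$. A normal sub-heap is a non-empty subset $S$ closed under $[-,-,-]$ with $[[a,e,s],a,e]\in S$ for all $a$ and $e,s\in S$; $a\sim_S b$ iff $[a,b,s]\in S$ for some (equivalently all) $s\in S$. A sub-heap $S$ is closed if $[ts',ts,s]\in S$ and $[s't,st,s]\in S$ for all $s,s'\in S$, $t$. A paragon is a non-empty normal sub-heap $P$ all of whose $\sim_P$-classes are closed sub-heaps. *)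

theory Defs
  imports Main
begin

class near_ring = group_add + semigroup_mult +
  assumes near_ring_distrib_left: "n * (m + m') = n * m + n * m'"

definition nr_congruence :: "('a::near_ring) rel \<Rightarrow> bool" where
  "nr_congruence R \<longleftrightarrow> equiv UNIV R \<and>
     (\<forall>a b c d. (a, b) \<in> R \<longrightarrow> (c, d) \<in> R \<longrightarrow> (a + c, b + d) \<in> R \<and> (a * c, b * d) \<in> R)"

definition normal_subheap :: "('a \<Rightarrow> 'a \<Rightarrow> 'a \<Rightarrow> 'a) \<Rightarrow> 'a set \<Rightarrow> bool" where
  "normal_subheap tern S \<longleftrightarrow> S \<noteq> {} \<and>
     (\<forall>a\<in>S. \<forall>b\<in>S. \<forall>c\<in>S. tern a b c \<in> S) \<and>
     (\<forall>a. \<forall>e\<in>S. \<forall>s\<in>S. tern (tern a e s) a e \<in> S)"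

definition heap_sim :: "('a \<Rightarrow> 'a \<Rightarrow> 'a \<Rightarrow> 'a) \<Rightarrow> 'a set \<Rightarrow> 'a \<Rightarrow> 'a \<Rightarrow> bool" where
  "heap_sim tern S a b \<longleftrightarrow> (\<exists>s\<in>S. tern a b s \<in> S)"

definition subheap :: "('a \<Rightarrow> 'a \<Rightarrow> 'a \<Rightarrow> 'a) \<Rightarrow> 'a set \<Rightarrow> bool" where
  "subheap tern S \<longleftrightarrow> (\<forall>a\<in>S. \<forall>b\<in>S. \<forall>c\<in>S. tern a b c \<in> S)"

definition closed_subheap ::
    "('a \<Rightarrow> 'a \<Rightarrow> 'a \<Rightarrow> 'a) \<Rightarrow> ('a \<Rightarrow> 'a \<Rightarrow> 'a) \<Rightarrow> 'a set \<Rightarrow> bool" where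
  "closed_subheap tern mult S \<longleftrightarrow> subheap tern S \<and>
     (\<forall>s\<in>S. \<forall>s'\<in>S. \<forall>t. tern (mult t s') (mult t s) s \<in> S \<and> tern (mult s' t) (mult s t) s \<in> S)"

definition paragon ::
    "('a \<Rightarrow> 'a \<Rightarrow> 'a \<Rightarrow> 'a) \<Rightarrow> ('a \<Rightarrow> 'a \<Rightarrow> 'a) \<Rightarrow> 'a set \<Rightarrow> bool" where
  "paragon tern mult P \<longleftrightarrow> normal_subheap tern P \<and>
     (\<forall>a. closed_subheap tern mult {b. heap_sim tern P a b})"

text \<open>The truss T(N): ternary operation [a,b,c] = a - b + c, with the multiplication of N.\<close>
definition T_tern :: "'a::near_ring \<Rightarrow> 'a \<Rightarrow> 'a \<Rightarrow> 'a" where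
  "T_tern a b c = a - b + c"

end

theory Submission
  imports Defs
begin

lemma cg_refl: "nr_congruence R \<Longrightarrow> (a, a) \<in> R"
  unfolding nr_congruence_def equiv_def refl_on_def by blast
lemma cg_sym: "nr_congruence R \<Longrightarrow> (a, b) \<in> R \<Longrightarrow> (b, a) \<in> R"
  unfolding nr_congruence_def equiv_def sym_def by blast
lemma cg_trans: "nr_congruence R \<Longrightarrow> (a, b) \<in> R \<Longrightarrow> (b, c) \<in> R \<Longrightarrow> (a, c) \<in> R"
  unfolding nr_congruence_def equiv_def trans_def by blast
lemma cg_add: "nr_congruence R \<Longrightarrow> (a, b) \<in> R \<Longrightarrow> (c, d) \<in> R \<Longrightarrow> (a + c, b + d) \<in> R"
  unfolding nr_congruence_def by blast
lemma cg_mult: "nr_congruence R \<Longrightarrow> (a, b) \<in> R \<Longrightarrow> (c, d) \<in> R \<Longrightarrow> (a * c, b * d) \<in> R"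
  unfolding nr_congruence_def by blast
lemma cg_minus:
  fixes a b :: "'a::near_ring"
  assumes R: "nr_congruence R" and ab: "(a, b) \<in> R" shows "(- a, - b) \<in> R"
proof -
  have "(- a + a + - b, - a + b + - b) \<in> R"
    by (intro cg_add[OF R] cg_refl[OF R] ab)
  then have "(- b, - a) \<in> R" by (simp add: add.assoc)
  thus ?thesis using cg_sym[OF R] by blast
qed
lemma cg_diff:
  fixes a b :: "'a::near_ring"
  assumes R: "nr_congruence R" and "(a, b) \<in> R" "(c, d) \<in> R" shows "(a - c, b - d) \<in> R"
  using cg_add[OF R assms(2) cg_minus[OF R assms(3)]] by simp
lemma cg_tern:
  fixes a b :: "'a::near_ring"
  assumes R: "nr_congruence R" and "(a, b) \<in> R" "(c, d) \<in> R" "(e, f) \<in> R"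
  shows "(T_tern a c e, T_tern b d f) \<in> R"
  unfolding T_tern_def by (intro cg_add[OF R] cg_diff[OF R] assms)

lemma cg_sim:
  fixes a b :: "'a::near_ring"
  assumes R: "nr_congruence R"
  shows "heap_sim T_tern (R``{x}) a b \<longleftrightarrow> (a, b) \<in> R"
proof
  assume "heap_sim T_tern (R``{x}) a b"
  then obtain s where s: "(x, s) \<in> R" "(x, a - b + s) \<in> R"
    unfolding heap_sim_def T_tern_def by auto
  have "(a - b + s, s) \<in> R" using s cg_sym[OF R] cg_trans[OF R] by blast
  then have "(a - b + s - s + b, s - s + b) \<in> R"
    by (intro cg_add[OF R] cg_diff[OF R] cg_refl[OF R])
  then show "(a, b) \<in> R" by (simp add: add.assoc)
next
  assume "(a, b) \<in> R"
  then have "(a - b + x, b - b + x) \<in> R"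
    by (intro cg_add[OF R] cg_diff[OF R] cg_refl[OF R])
  then have "(x, a - b + x) \<in> R" using cg_sym[OF R] by simp
  moreover have "x \<in> R``{x}" using cg_refl[OF R] by blast
  ultimately show "heap_sim T_tern (R``{x}) a b"
    unfolding heap_sim_def T_tern_def by blast
qed

lemma dir1:
  fixes P :: "'a::near_ring set"
  assumes R: "nr_congruence R" and P: "P = R``{x}"
  shows "paragon T_tern (*) P"
  unfolding paragon_def
proof (intro conjI allI)
  show "normal_subheap T_tern P"
    unfolding normal_subheap_def
  proof (intro conjI ballI allI)
    show "P \<noteq> {}" using P cg_refl[OF R] by blast
  next
    fix a b c assume "a \<in> P" "b \<in> P" "c \<in> P"
    then have "(a, x) \<in> R" "(b, x) \<in> R" "(c, x) \<in> R" using P cg_sym[OF R] by auto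
    then have "(T_tern a b c, T_tern x x x) \<in> R" by (intro cg_tern[OF R])
    then show "T_tern a b c \<in> P" using P cg_sym[OF R] by (simp add: T_tern_def)
  next
    fix a e s assume "e \<in> P" "s \<in> P"
    then have "(s, e) \<in> R" using P cg_sym[OF R] cg_trans[OF R] by blast
    then have "(T_tern (T_tern a e s) a e, T_tern (T_tern a e e) a e) \<in> R"
      by (intro cg_tern[OF R] cg_refl[OF R])
    then have "(T_tern (T_tern a e s) a e, e) \<in> R" by (simp add: T_tern_def)
    then show "T_tern (T_tern a e s) a e \<in> P" using \<open>e \<in> P\<close> P cg_trans[OF R] cg_sym[OF R] by blast
  qed
next
  fix a
  have eq: "{b. heap_sim T_tern P a b} = R``{a}" using cg_sim[OF R] P by auto
  show "closed_subheap T_tern (*) {b. heap_sim T_tern P a b}"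
    unfolding eq closed_subheap_def subheap_def
  proof (intro conjI ballI allI)
    fix u v w assume "u \<in> R``{a}" "v \<in> R``{a}" "w \<in> R``{a}"
    then have "(u, a) \<in> R" "(v, a) \<in> R" "(w, a) \<in> R" using cg_sym[OF R] by auto
    then have "(T_tern u v w, T_tern a a a) \<in> R" by (intro cg_tern[OF R])
    then show "T_tern u v w \<in> R``{a}" using cg_sym[OF R] by (simp add: T_tern_def)
  next
    fix s s' t assume "s \<in> R``{a}" "s' \<in> R``{a}"
    then have ss: "(s', s) \<in> R" and as: "(a, s) \<in> R" using cg_sym[OF R] cg_trans[OF R] by blast+
    have "(T_tern (t * s') (t * s) s, T_tern (t * s) (t * s) s) \<in> R"
      by (intro cg_tern[OF R] cg_refl[OF R] cg_mult[OF R] ss)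
    then have "(T_tern (t * s') (t * s) s, s) \<in> R" by (simp add: T_tern_def)
    then show "T_tern (t * s') (t * s) s \<in> R``{a}" using as cg_sym[OF R] cg_trans[OF R] by blast
    have "(T_tern (s' * t) (s * t) s, T_tern (s * t) (s * t) s) \<in> R"
      by (intro cg_tern[OF R] cg_refl[OF R] cg_mult[OF R] ss)
    then have "(T_tern (s' * t) (s * t) s, s) \<in> R" by (simp add: T_tern_def)
    then show "T_tern (s' * t) (s * t) s \<in> R``{a}" using as cg_sym[OF R] cg_trans[OF R] by blast
  qed
qed

lemma aux: fixes x y z :: "'a::group_add" shows "x - (y - z + x) = z - y"
  by (simp add: diff_conv_add_uminus minus_add add.assoc del: add_uminus_conv_diff minus_diff_eq)

lemma dir2:
  fixes P :: "'a::near_ring set"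
  assumes par: "paragon T_tern (*) P"
  shows "\<exists>R. nr_congruence R \<and> P \<in> UNIV // R"
proof -
  have ns: "normal_subheap T_tern P" and cl: "\<And>a. closed_subheap T_tern (*) {b. heap_sim T_tern P a b}"
    using par unfolding paragon_def by blast+
  have ne: "P \<noteq> {}" and ns1: "\<And>a b c. a \<in> P \<Longrightarrow> b \<in> P \<Longrightarrow> c \<in> P \<Longrightarrow> T_tern a b c \<in> P"
    and ns2: "\<And>a e s. e \<in> P \<Longrightarrow> s \<in> P \<Longrightarrow> T_tern (T_tern a e s) a e \<in> P"
    using ns unfolding normal_subheap_def by blast+
  obtain p where pP: "p \<in> P" using ne by blast
  define K where "K = {x. x + p \<in> P}"
  have K0: "0 \<in> K" using pP K_def by simp
  have Kdiff: "x - y \<in> K" if "x \<in> K" "y \<in> K" for x y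
  proof -
    have "T_tern (x + p) (y + p) p \<in> P" using that pP unfolding K_def by (intro ns1) auto
    moreover have "T_tern (x + p) (y + p) p = x - y + p"
      unfolding T_tern_def by (simp add: diff_conv_add_uminus add.assoc minus_add del: add_uminus_conv_diff)
    ultimately show ?thesis unfolding K_def by simp
  qed
  have Kneg: "- x \<in> K" if "x \<in> K" for x using Kdiff[OF K0 that] by simp
  have Kadd: "x + y \<in> K" if "x \<in> K" "y \<in> K" for x y using Kdiff[OF that(1) Kneg[OF that(2)]] by simp
  have Knorm: "g + k - g \<in> K" if "k \<in> K" for g k
  proof -
    have "T_tern (T_tern (g + p) p (k + p)) (g + p) p \<in> P"
      using that pP unfolding K_def by (intro ns2) auto
    moreover have "T_tern (T_tern (g + p) p (k + p)) (g + p) p = g + k - g + p"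
      unfolding T_tern_def by (simp add: diff_conv_add_uminus add.assoc minus_add del: add_uminus_conv_diff)
    ultimately show ?thesis unfolding K_def by simp
  qed
  have sim: "heap_sim T_tern P a b \<longleftrightarrow> a - b \<in> K" for a b
  proof
    assume "heap_sim T_tern P a b"
    then obtain s where s: "s \<in> P" "a - b + s \<in> P" unfolding heap_sim_def T_tern_def by auto
    have "s - p \<in> K" "a - b + s - p \<in> K" using s unfolding K_def by auto
    from Kdiff[OF this(2) this(1)] show "a - b \<in> K" by (simp add: diff_conv_add_uminus add.assoc minus_add del: add_uminus_conv_diff)
  next
    assume "a - b \<in> K"
    then show "heap_sim T_tern P a b" unfolding heap_sim_def T_tern_def K_def using pP by auto
  qed
  define R where "R = {(a, b). a - b \<in> K}"
  have Rsym: "(b, a) \<in> R" if "(a, b) \<in> R" for a b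
    using Kneg[of "a - b"] that unfolding R_def by (simp add: minus_diff_eq)
  have Rtrans: "(a, c) \<in> R" if "(a, b) \<in> R" "(b, c) \<in> R" for a b c
    using Kadd[of "a - b" "b - c"] that unfolding R_def by (simp add: diff_conv_add_uminus add.assoc del: add_uminus_conv_diff)
  have Radd: "(a + c, b + d) \<in> R" if "(a, b) \<in> R" "(c, d) \<in> R" for a b c d
  proof -
    have "c - d \<in> K" "a - b \<in> K" using that unfolding R_def by auto
    then have "a + (c - d) - a + (a - b) \<in> K" by (intro Kadd Knorm)
    moreover have "a + (c - d) - a + (a - b) = (a + c) - (b + d)"
      by (simp add: diff_conv_add_uminus add.assoc minus_add del: add_uminus_conv_diff)
    ultimately show ?thesis unfolding R_def by simp
  qed
  have Rmul: "(t * s, t * s') \<in> R \<and> (s * t, s' * t) \<in> R" if "(s, s') \<in> R" for s s' t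
  proof -
    define S where "S = {b. s - b \<in> K}"
    have c: "closed_subheap T_tern (*) S" using cl[of s] sim unfolding S_def by simp
    then have cc: "\<And>u u' t. u \<in> S \<Longrightarrow> u' \<in> S \<Longrightarrow> T_tern (t*u') (t*u) u \<in> S \<and> T_tern (u'*t) (u*t) u \<in> S"
      unfolding closed_subheap_def by blast
    have "s \<in> S" using K0 unfolding S_def by simp
    moreover have "s' \<in> S" using that unfolding R_def S_def by simp
    ultimately have "T_tern (t * s') (t * s) s \<in> S \<and> T_tern (s' * t) (s * t) s \<in> S"
      by (rule cc)
    then have "T_tern (t * s') (t * s) s \<in> {b. s - b \<in> K} \<and> T_tern (s' * t) (s * t) s \<in> {b. s - b \<in> K}"
      unfolding S_def .
    moreover have "s - T_tern (t * s') (t * s) s = t * s - t * s'"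
      "s - T_tern (s' * t) (s * t) s = s * t - s' * t"
      unfolding T_tern_def by (rule aux)+
    ultimately show ?thesis unfolding R_def by simp
  qed
  have Rrefl: "(x, x) \<in> R" for x unfolding R_def using K0 by (simp only: diff_self case_prod_conv mem_Collect_eq)
  have Rmul2: "(a * c, b * d) \<in> R" if "(a, b) \<in> R" "(c, d) \<in> R" for a b c d
    using Rtrans[OF conjunct1[OF Rmul[OF that(2)]] conjunct2[OF Rmul[OF that(1)]]] .
  have "equiv UNIV R"
  proof (rule equivI)
    show "R \<subseteq> UNIV \<times> UNIV" by simp
    show "refl_on UNIV R" by (rule refl_onI) (auto intro: Rrefl)
    show "sym R" by (rule symI) (rule Rsym)
    show "trans R" by (rule transI) (rule Rtrans)
  qed
  then have cong: "nr_congruence R"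
    unfolding nr_congruence_def using Radd Rmul2 by blast
  have mem: "b \<in> P \<longleftrightarrow> (b, p) \<in> R" for b
    unfolding R_def K_def by (simp add: diff_conv_add_uminus add.assoc del: add_uminus_conv_diff)
  have "P = R``{p}"
    using mem Rsym by blast
  then have "P \<in> UNIV // R" unfolding quotient_def by blast
  with cong show ?thesis by blast
qed

theorem corollary3p15:
  fixes P :: "'a::near_ring set"
  shows "(\<exists>R. nr_congruence R \<and> P \<in> UNIV // R) \<longleftrightarrow> paragon T_tern (*) P"
proof
  assume "\<exists>R. nr_congruence R \<and> P \<in> UNIV // R"
  then obtain R x where "nr_congruence R" "P = R``{x}" unfolding quotient_def by blast
  then show "paragon T_tern (*) P" by (rule dir1)
next
  assume "paragon T_tern (*) P"
  then show "\<exists>R. nr_congruence R \<and> P \<in> UNIV // R" by (rule dir2)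
qed

end
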